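(* Let $n\ge 2$ and $d\ge 2$, and let $|\psi\rangle,|\varphi\rangle\in(\mathbb{C}^d)^{\otimes n}$ be permutation-symmetric states. Suppose there exist invertible $d\times d$ complex matrices $A_1,\ldots,A_n$ such that $$A_1\otimes A_2\otimes\cdots\otimes A_n|\psi\rangle=|\varphi\rangle.$$ Then there exists an invertible $d\times d$ matrix $A$ such that $$A\otimes A\otimes\cdots\otimes A\,|\psi\rangle=|\varphi\rangle$$ ($n$ factors). Moreover, if $A_1,\ldots,A_n$ are all unitary, then $A$ can be chosen unitary.
   Context: A state $|\psi\rangle\in(\mathbb{C}^d)^{\otimes n}$ is permutation-symmetric if $P_\sigma|\psi\rangle=|\psi\rangle$ for every permutation $\sigma$ of $\{1,\ldots,n\}$, where $P_\sigma|i_1 i_2\cdots i_n\rangle=|i_{\sigma(1)}i_{\sigma(2)}\cdots i_{\sigma(n)}\rangle$ on computational basis vectors. *)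

theory Defs
  imports Complex_Main "HOL-Combinatorics.Permutations" "Jordan_Normal_Form.Matrix"
begin

definition idx :: "nat \<Rightarrow> nat \<Rightarrow> nat list set" where
  "idx n d = {xs. length xs = n \<and> set xs \<subseteq> {..<d}}"

(* A vector in (C^d)^{\<otimes> n} is its coefficient function on basis index tuples
   (values outside idx n d are irrelevant). *)

(* P_sigma |i_1...i_n> = |i_sigma(1) ... i_sigma(n)>; psi is permutation-symmetric iff
   P_sigma psi = psi for all sigma; coefficientwise (P_sigma psi)(j) = psi(j o sigma^{-1}). *)
definition perm_apply :: "nat \<Rightarrow> (nat \<Rightarrow> nat) \<Rightarrow> (nat list \<Rightarrow> complex) \<Rightarrow> (nat list \<Rightarrow> complex)" where
  "perm_apply n \<sigma> \<psi> = (\<lambda>xs. \<psi> (map (\<lambda>k. xs ! (inv_into {..<n} \<sigma> k)) [0..<n]))"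

definition perm_symmetric :: "nat \<Rightarrow> nat \<Rightarrow> (nat list \<Rightarrow> complex) \<Rightarrow> bool" where
  "perm_symmetric n d \<psi> \<longleftrightarrow>
     (\<forall>\<sigma>. \<sigma> permutes {..<n} \<longrightarrow> (\<forall>xs\<in>idx n d. perm_apply n \<sigma> \<psi> xs = \<psi> xs))"

(* (A_1 \<otimes> ... \<otimes> A_n) psi, coefficientwise; A k is the (k+1)-th factor. *)
definition tensor_apply :: "nat \<Rightarrow> nat \<Rightarrow> (nat \<Rightarrow> complex mat) \<Rightarrow> (nat list \<Rightarrow> complex) \<Rightarrow> (nat list \<Rightarrow> complex)" where
  "tensor_apply n d A \<psi> = (\<lambda>xs. \<Sum>ys\<in>idx n d. (\<Prod>k<n. A k $$ (xs ! k, ys ! k)) * \<psi> ys)"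

definition conj_transpose :: "complex mat \<Rightarrow> complex mat" where
  "conj_transpose A = mat (dim_col A) (dim_row A) (\<lambda>(i,j). cnj (A $$ (j,i)))"

definition unitary_mat :: "nat \<Rightarrow> complex mat \<Rightarrow> bool" where
  "unitary_mat d U \<longleftrightarrow> U \<in> carrier_mat d d \<and> U * conj_transpose U = 1\<^sub>m d \<and> conj_transpose U * U = 1\<^sub>m d"

end

theory Submission imports Defs "Jordan_Normal_Form.Schur_Decomposition" "HOL-Computational_Algebra.Polynomial_Factorial" "HOL-Computational_Algebra.Field_as_Ring" begin


lemma dvd_power_sub: "(a - b) dvd ((a::'a::comm_ring_1) ^ n - b ^ n)"
proof (induction n)
  case 0 then show ?case by simp
next
  case (Suc n)
  have "a ^ Suc n - b ^ Suc n = a * (a ^ n - b ^ n) + (a - b) * b ^ n"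
    by (simp add: algebra_simps)
  then show ?case using Suc by (simp add: dvd_add)
qed

lemma comb_root_dvd:
  fixes q f :: "complex poly"
  assumes "q dvd f" "[:-l,1:] dvd f" "poly q l \<noteq> 0"
  shows "[:-l,1:] * q dvd f"
proof -
  obtain g where g: "f = q * g" using assms(1) by auto
  have "poly f l = 0" using assms(2) by (simp add: poly_eq_0_iff_dvd)
  then have "poly g l = 0" using g assms(3) by simp
  then have "[:-l,1:] dvd g" by (simp add: poly_eq_0_iff_dvd)
  then show ?thesis using g by (metis mult.commute mult_dvd_mono dvd_refl)
qed

lemma complex_nth_root_ex: "(l::complex) \<noteq> 0 \<Longrightarrow> n > 0 \<Longrightarrow> \<exists>m. m ^ n = l"
proof -
  assume l: "l \<noteq> 0" and n: "n > 0"
  have "rcis (root n (cmod l)) (Arg l / real n) ^ n = rcis (root n (cmod l) ^ n) (real n * (Arg l / real n))"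
    by (rule DeMoivre2)
  also have "\<dots> = rcis (cmod l) (Arg l)" using n by simp
  also have "\<dots> = l" by (rule rcis_cmod_Arg)
  finally show ?thesis by blast
qed

lemma base_interp:
  fixes S :: "complex set"
  assumes "finite S" "0 \<notin> S" "n > 0"
  shows "\<exists>p. (\<Prod>l\<in>S. [:-l,1:]) dvd p ^ n - [:0,1:]"
  using assms
proof (induction S rule: finite_induct)
  case empty then show ?case by auto
next
  case (insert l S)
  then obtain p' where p': "(\<Prod>l\<in>S. [:-l,1:]) dvd p' ^ n - [:0,1:]" by auto
  define q' where "q' = ((\<Prod>l\<in>S. [:-l,1:]) :: complex poly)"
  have q'l: "poly q' l \<noteq> 0" unfolding q'_def using insert by (auto simp: poly_prod)
  have l0: "l \<noteq> 0" using insert by auto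
  obtain m where m: "m ^ n = l" using complex_nth_root_ex[OF l0 \<open>n>0\<close>] by auto
  define c where "c = (m - poly p' l) / poly q' l"
  define p where "p = p' + [:c:] * q'"
  have pp: "p - p' = [:c:] * q'" by (simp add: p_def)
  have "q' dvd p - p'" unfolding pp by (simp add: dvd_smult)
  then have e1: "q' dvd p ^ n - p' ^ n"
    using dvd_power_sub[of p p' n] by (rule dvd_trans)
  have e2: "q' dvd p' ^ n - [:0,1:]" using p' unfolding q'_def by simp
  have eq: "p ^ n - [:0,1:] = (p ^ n - p' ^ n) + (p' ^ n - [:0,1:])" by simp
  have d1: "q' dvd p ^ n - [:0,1:]" unfolding eq by (rule dvd_add[OF e1 e2])
  have "poly p l = m" unfolding p_def c_def using q'l by simp
  then have "poly (p ^ n - [:0,1:]) l = 0" using m by simp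
  then have d2: "[:-l,1:] dvd p ^ n - [:0,1:]" by (metis poly_eq_0_iff_dvd)
  have "(\<Prod>l\<in>insert l S. [:-l,1:]) = [:-l,1:] * q'" unfolding q'_def using insert by simp
  then show ?case using comb_root_dvd[OF d1 d2 q'l] by metis
qed

lemma coprime_inv_ex:
  fixes a q :: "complex poly"
  assumes q0: "q \<noteq> 0" and nr: "\<And>z. poly q z = 0 \<Longrightarrow> poly a z \<noteq> 0"
  shows "\<exists>h. q dvd a * h - 1"
proof -
  define g where "g = gcd a q"
  have g0: "g \<noteq> 0" unfolding g_def using q0 by simp
  have "degree g = 0"
  proof (rule ccontr)
    assume "degree g \<noteq> 0"
    then have "\<not> constant (poly g)" by (simp add: constant_degree)
    then obtain z where z: "poly g z = 0" using fundamental_theorem_of_algebra by blast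
    have "g dvd q" "g dvd a" unfolding g_def by auto
    then have "poly q z = 0" "poly a z = 0" using z by (auto simp: poly_eq_0_iff_dvd dest: dvd_trans)
    then show False using nr by auto
  qed
  then obtain c where gc: "g = [:c:]" by (metis degree_0_id)
  with g0 have c0: "c \<noteq> 0" by auto
  obtain u v where uv: "u * a + v * q = g"
    using bezout_coefficients_fst_snd[of a q] unfolding g_def by blast
  have "a * smult (1/c) u - 1 = smult (1/c) (u * a) - smult (1/c) g"
    using c0 gc by (simp add: algebra_simps)
  also have "\<dots> = smult (1/c) (u * a - g)" by (simp add: smult_diff_right)
  also have "u * a - g = - (v * q)" using uv by (simp add: algebra_simps)
  also have "smult (1/c) (- (v * q)) = q * smult (-1/c) v" by (simp add: algebra_simps)
  finally show ?thesis by (metis dvd_triv_left)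
qed

lemma binom2: "\<exists>R. ((a::'a::comm_ring_1) - e) ^ n = a ^ n - of_nat n * a ^ (n - 1) * e + e ^ 2 * R"
proof (induction n)
  case 0 then show ?case by (intro exI[of _ 0]) simp
next
  case (Suc n)
  then obtain R where R: "(a - e) ^ n = a ^ n - of_nat n * a ^ (n - 1) * e + e ^ 2 * R" by blast
  show ?case
  proof (cases n)
    case 0 then show ?thesis by (intro exI[of _ 0]) simp
  next
    case (Suc m)
    have "(a - e) ^ Suc n = (a - e) * (a ^ n - of_nat n * a ^ (n - 1) * e + e ^ 2 * R)"
      using R by simp
    also have "\<dots> = a ^ Suc n - of_nat (Suc n) * a ^ (Suc n - 1) * e + e ^ 2 * (a * R + of_nat n * a ^ m - e * R)"
      using Suc by (simp add: algebra_simps power2_eq_square)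
    finally show ?thesis by blast
  qed
qed

lemma newton_step:
  fixes q p :: "complex poly"
  assumes q0: "q \<noteq> 0" and n: "n > 0" and nz: "\<And>z. poly q z = 0 \<Longrightarrow> z \<noteq> 0"
    and d: "q dvd p ^ n - [:0,1:]"
  shows "\<exists>p'. q ^ 2 dvd p' ^ n - [:0,1:]"
proof -
  define g where "g = p ^ n - [:0,1:]"
  have nr: "poly (of_nat n * p ^ (n - 1)) z \<noteq> 0" if z: "poly q z = 0" for z
  proof -
    have "poly g z = 0" using d z unfolding g_def by (metis dvd_trans poly_eq_0_iff_dvd)
    then have "poly p z ^ n = z" unfolding g_def by simp
    then have "poly p z \<noteq> 0" using nz[OF z] n by auto
    then show ?thesis using n by (simp add: of_nat_poly)
  qed
  obtain h where h: "q dvd of_nat n * p ^ (n - 1) * h - 1" using coprime_inv_ex[OF q0 nr] by blast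
  obtain s where s: "of_nat n * p ^ (n - 1) * h - 1 = q * s" using h by auto
  obtain r where r: "g = q * r" using d unfolding g_def by auto
  define p' where "p' = p - g * h"
  obtain R where R: "p' ^ n = p ^ n - of_nat n * p ^ (n - 1) * (g * h) + (g * h) ^ 2 * R"
    using binom2[of p "g * h" n] unfolding p'_def by blast
  have e2: "of_nat n * p ^ (n - 1) * h = 1 + q * s" using s by (simp add: algebra_simps)
  have "p' ^ n - [:0,1:] = g - g * (of_nat n * p ^ (n - 1) * h) + (g * h) ^ 2 * R"
    using R unfolding g_def by (simp add: algebra_simps)
  also have "\<dots> = g - g * (1 + q * s) + (g * h) ^ 2 * R" using e2 by simp
  also have "\<dots> = q ^ 2 * (r ^ 2 * h ^ 2 * R - r * s)" using r by (simp add: algebra_simps power2_eq_square)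
  finally show ?thesis by (metis dvd_triv_left)
qed

lemma newton_iter:
  fixes q :: "complex poly"
  assumes q0: "q \<noteq> 0" and n: "n > 0" and nz: "\<And>z. poly q z = 0 \<Longrightarrow> z \<noteq> 0"
    and d: "\<exists>p. q dvd p ^ n - [:0,1:]"
  shows "\<exists>p. q ^ (2 ^ k) dvd p ^ n - [:0,1:]"
proof (induction k)
  case 0 then show ?case using d by simp
next
  case (Suc k)
  then obtain p where p: "q ^ (2 ^ k) dvd p ^ n - [:0,1:]" by blast
  have "q ^ (2 ^ k) \<noteq> 0" using q0 by simp
  moreover have "poly (q ^ (2 ^ k)) z = 0 \<Longrightarrow> z \<noteq> 0" for z using nz by (simp add: poly_power)
  ultimately obtain p' where "(q ^ (2 ^ k)) ^ 2 dvd p' ^ n - [:0,1:]" using newton_step[OF _ n _ p] by blast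
  moreover have "(q ^ (2 ^ k)) ^ 2 = q ^ (2 ^ Suc k)" by (simp add: power_mult[symmetric] mult.commute)
  ultimately show ?case by metis
qed

lemma prod_list_dvd_pow:
  fixes S :: "complex set"
  assumes "finite S" "set es \<subseteq> S"
  shows "(\<Prod>e\<leftarrow>es. [:-e,1:]) dvd (\<Prod>l\<in>S. [:-l,1:]) ^ length es"
  using assms(2)
proof (induction es)
  case Nil then show ?case by simp
next
  case (Cons e es)
  have "[:-e,1:] dvd (\<Prod>l\<in>S. [:-l,1:])" using Cons.prems assms(1) by (intro dvd_prodI) auto
  moreover have "(\<Prod>e\<leftarrow>es. [:-e,1:]) dvd (\<Prod>l\<in>S. [:-l,1:]) ^ length es" using Cons by simp
  ultimately have "[:-e,1:] * (\<Prod>e\<leftarrow>es. [:-e,1:]) dvd (\<Prod>l\<in>S. [:-l,1:]) * (\<Prod>l\<in>S. [:-l,1:]) ^ length es"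
    by (rule mult_dvd_mono)
  then show ?case by simp
qed

lemma root_poly_list:
  fixes es :: "complex list"
  assumes nz: "\<forall>e\<in>set es. e \<noteq> 0" and n: "n > 0"
  shows "\<exists>p. (\<Prod>e\<leftarrow>es. [:-e,1:]) dvd p ^ n - [:0,1:]"
proof -
  define q0 where "q0 = ((\<Prod>l\<in>set es. [:-l,1:]) :: complex poly)"
  have q00: "q0 \<noteq> 0" unfolding q0_def by (simp add: prod_zero_iff)
  have rts: "poly q0 z = 0 \<Longrightarrow> z \<noteq> 0" for z using nz unfolding q0_def by (auto simp: poly_prod)
  have "\<exists>p. q0 dvd p ^ n - [:0,1:]" unfolding q0_def using base_interp[of "set es" n] nz n by auto
  from newton_iter[OF q00 n rts this, of "length es"]
  obtain p where p: "q0 ^ (2 ^ length es) dvd p ^ n - [:0,1:]" by blast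
  have "q0 ^ length es dvd q0 ^ (2 ^ length es)" by (rule le_imp_power_dvd) (simp add: less_imp_le less_exp)
  moreover have "(\<Prod>e\<leftarrow>es. [:-e,1:]) dvd q0 ^ length es" unfolding q0_def by (rule prod_list_dvd_pow) auto
  ultimately show ?thesis using p by (meson dvd_trans)
qed


lemma sm1_left: "A \<in> carrier_mat d d \<Longrightarrow> (a \<cdot>\<^sub>m 1\<^sub>m d) * (A :: complex mat) = a \<cdot>\<^sub>m A"
  by (simp add: mult_smult_assoc_mat[of _ d d] left_mult_one_mat)
lemma sm1_right: "A \<in> carrier_mat d d \<Longrightarrow> (A :: complex mat) * (a \<cdot>\<^sub>m 1\<^sub>m d) = a \<cdot>\<^sub>m A"
  using mult_smult_distrib[of A d d "1\<^sub>m d" d a] right_mult_one_mat[of A d d] by simp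
lemma smult_smult_mat: "a \<cdot>\<^sub>m (b \<cdot>\<^sub>m (A :: complex mat)) = (a * b) \<cdot>\<^sub>m A"
  by (rule eq_matI) auto
lemma zero_smult_mat: "A \<in> carrier_mat d e \<Longrightarrow> 0 \<cdot>\<^sub>m (A :: complex mat) = 0\<^sub>m d e"
  by (rule eq_matI) auto
lemma one_smult_mat: "1 \<cdot>\<^sub>m (A :: complex mat) = A"
  by (rule eq_matI) auto

definition meval :: "complex poly \<Rightarrow> complex mat \<Rightarrow> complex mat" where
  "meval p M = fold_coeffs (\<lambda>a B. a \<cdot>\<^sub>m 1\<^sub>m (dim_row M) + M * B) p (0\<^sub>m (dim_row M) (dim_row M))"

lemma meval_0[simp]: "meval 0 M = 0\<^sub>m (dim_row M) (dim_row M)"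
  unfolding meval_def by simp

lemma meval_pCons:
  assumes M: "M \<in> carrier_mat d d"
  shows "meval (pCons a p) M = a \<cdot>\<^sub>m 1\<^sub>m d + M * meval p M"
proof (cases "a \<noteq> 0 \<or> p \<noteq> 0")
  case True
  then have "fold_coeffs f (pCons a p) = f a \<circ> fold_coeffs f p" for f :: "complex \<Rightarrow> complex mat \<Rightarrow> complex mat"
    by (metis fold_coeffs_pCons_coeff_not_0_eq fold_coeffs_pCons_not_0_0_eq)
  then show ?thesis unfolding meval_def using M by simp
next
  case False
  then show ?thesis using M by (auto simp: meval_def)
qed

lemma meval_carrier[simp]:
  assumes M: "M \<in> carrier_mat d d"
  shows "meval p M \<in> carrier_mat d d"
proof (induction p rule: pCons_induct)
  case 0 then show ?case using M by simp
next
  case (pCons a p) then show ?case using M by (simp add: meval_pCons[OF M])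
qed

lemma meval_dims[simp]:
  assumes M: "M \<in> carrier_mat d d"
  shows "dim_row (meval p M) = dim_row M" "dim_col (meval p M) = dim_row M"
  using meval_carrier[OF M, of p] M unfolding carrier_mat_def by auto

lemma meval_add:
  assumes M: "M \<in> carrier_mat d d"
  shows "meval (p + q) M = meval p M + meval q M"
proof (induction p arbitrary: q rule: pCons_induct)
  case 0 then show ?case using M meval_carrier[OF M, of q] by simp
next
  case (pCons a p)
  obtain b q' where q: "q = pCons b q'" by (cases q)
  have P: "meval p M \<in> carrier_mat d d" and Q: "meval q' M \<in> carrier_mat d d" using M by auto
  have dims: "dim_row (meval p M) = d" "dim_col (meval p M) = d" "dim_row (meval q' M) = d" "dim_col (meval q' M) = d"
    "dim_row M = d" "dim_col M = d" using P Q M unfolding carrier_mat_def by auto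
  have "meval (pCons a p + q) M = (a + b) \<cdot>\<^sub>m 1\<^sub>m d + M * (meval p M + meval q' M)"
    using pCons q by (simp add: meval_pCons[OF M])
  also have "\<dots> = (a + b) \<cdot>\<^sub>m 1\<^sub>m d + (M * meval p M + M * meval q' M)"
    by (simp add: mult_add_distrib_mat[OF M P Q])
  also have "\<dots> = (a \<cdot>\<^sub>m 1\<^sub>m d + M * meval p M) + (b \<cdot>\<^sub>m 1\<^sub>m d + M * meval q' M)"
    by (intro eq_matI) (simp_all add: dims distrib_right)
  finally show ?case using q by (simp add: meval_pCons[OF M])
qed

lemma meval_smult:
  assumes M: "M \<in> carrier_mat d d"
  shows "meval (smult c p) M = c \<cdot>\<^sub>m meval p M"
proof (induction p rule: pCons_induct)
  case 0 then show ?case using M by auto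
next
  case (pCons a p)
  have P: "meval p M \<in> carrier_mat d d" using M by auto
  have dims: "dim_row (meval p M) = d" "dim_col (meval p M) = d"
    "dim_row M = d" "dim_col M = d" using P M unfolding carrier_mat_def by auto
  have "meval (smult c (pCons a p)) M = (c * a) \<cdot>\<^sub>m 1\<^sub>m d + M * (c \<cdot>\<^sub>m meval p M)"
    using pCons by (simp add: meval_pCons[OF M])
  also have "\<dots> = (c * a) \<cdot>\<^sub>m 1\<^sub>m d + c \<cdot>\<^sub>m (M * meval p M)"
    by (simp add: mult_smult_distrib[OF M P])
  also have "\<dots> = c \<cdot>\<^sub>m (a \<cdot>\<^sub>m 1\<^sub>m d + M * meval p M)"
    by (intro eq_matI) (simp_all add: dims distrib_left)
  finally show ?case by (simp add: meval_pCons[OF M])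
qed

lemma meval_mult:
  assumes M: "M \<in> carrier_mat d d"
  shows "meval (p * q) M = meval p M * meval q M"
proof (induction p rule: pCons_induct)
  case 0 then show ?case using M left_mult_zero_mat[OF meval_carrier[OF M, of q], of d] by simp
next
  case (pCons a p)
  have P: "meval p M \<in> carrier_mat d d" and Q: "meval q M \<in> carrier_mat d d" using M by auto
  have MP: "M * meval p M \<in> carrier_mat d d" using M P by simp
  have "meval (pCons a p * q) M = a \<cdot>\<^sub>m meval q M + (0 \<cdot>\<^sub>m 1\<^sub>m d + M * (meval p M * meval q M))"
    by (simp add: meval_add[OF M] meval_smult[OF M] meval_pCons[OF M] pCons)
  also have "0 \<cdot>\<^sub>m 1\<^sub>m d = (0\<^sub>m d d :: complex mat)" by (rule zero_smult_mat) simp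
  also have "M * (meval p M * meval q M) = (M * meval p M) * meval q M"
    by (rule assoc_mult_mat[symmetric, OF M P Q])
  also have "0\<^sub>m d d + (M * meval p M) * meval q M = (M * meval p M) * meval q M"
    using MP Q by simp
  also have "a \<cdot>\<^sub>m meval q M = (a \<cdot>\<^sub>m 1\<^sub>m d) * meval q M" using Q by (simp add: sm1_left)
  also have "(a \<cdot>\<^sub>m 1\<^sub>m d) * meval q M + (M * meval p M) * meval q M = (a \<cdot>\<^sub>m 1\<^sub>m d + M * meval p M) * meval q M"
    by (rule add_mult_distrib_mat[symmetric]) (use MP Q in auto)
  finally show ?case by (simp add: meval_pCons[OF M])
qed

lemma meval_comm_poly:
  assumes M: "M \<in> carrier_mat d d"
  shows "meval p M * meval q M = meval q M * meval p M"
  using meval_mult[OF M, of p q] meval_mult[OF M, of q p] by (simp add: mult.commute)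

lemma meval_const:
  assumes M: "M \<in> carrier_mat d d"
  shows "meval [:c:] M = c \<cdot>\<^sub>m 1\<^sub>m d"
  using M by (simp add: meval_pCons[OF M])

lemma meval_one:
  assumes M: "M \<in> carrier_mat d d"
  shows "meval 1 M = 1\<^sub>m d"
  using meval_const[OF M, of 1] by (simp add: one_pCons one_smult_mat)

lemma meval_X:
  assumes M: "M \<in> carrier_mat d d"
  shows "meval [:0,1:] M = M"
proof -
  have "meval [:0,1:] M = 0 \<cdot>\<^sub>m 1\<^sub>m d + M * (1 \<cdot>\<^sub>m 1\<^sub>m d)" using M by (simp add: meval_pCons[OF M])
  also have "\<dots> = M" using M by (simp add: one_smult_mat zero_smult_mat[of _ d d])
  finally show ?thesis .
qed

lemma meval_power:
  assumes M: "M \<in> carrier_mat d d"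
  shows "meval (p ^ k) M = meval p M ^\<^sub>m k"
proof (induction k)
  case 0 then show ?case using M meval_one[OF M] meval_carrier[OF M, of p] by simp
next
  case (Suc k)
  have "meval (p ^ Suc k) M = meval p M * meval (p ^ k) M" by (simp add: meval_mult[OF M])
  also have "\<dots> = meval (p ^ k) M * meval p M" by (rule meval_comm_poly[OF M])
  finally show ?case using Suc by simp
qed

lemma meval_comm:
  assumes M: "M \<in> carrier_mat d d" and N: "N \<in> carrier_mat d d" and c: "N * M = M * N"
  shows "N * meval p M = meval p M * N"
proof (induction p rule: pCons_induct)
  case 0 then show ?case using M N by simp
next
  case (pCons a p)
  have P: "meval p M \<in> carrier_mat d d" using M by auto
  have "N * (a \<cdot>\<^sub>m 1\<^sub>m d + M * meval p M) = N * (a \<cdot>\<^sub>m 1\<^sub>m d) + N * (M * meval p M)"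
    by (rule mult_add_distrib_mat) (use N M P in auto)
  also have "N * (a \<cdot>\<^sub>m 1\<^sub>m d) = (a \<cdot>\<^sub>m 1\<^sub>m d) * N" using N by (simp add: sm1_left sm1_right)
  also have "N * (M * meval p M) = (N * M) * meval p M" by (rule assoc_mult_mat[symmetric, OF N M P])
  also have "\<dots> = (M * N) * meval p M" using c by simp
  also have "\<dots> = M * (N * meval p M)" by (rule assoc_mult_mat[OF M N P])
  also have "\<dots> = M * (meval p M * N)" using pCons by simp
  also have "\<dots> = (M * meval p M) * N" by (rule assoc_mult_mat[symmetric, OF M P N])
  also have "(a \<cdot>\<^sub>m 1\<^sub>m d) * N + (M * meval p M) * N = (a \<cdot>\<^sub>m 1\<^sub>m d + M * meval p M) * N"
    by (rule add_mult_distrib_mat[symmetric]) (use N M P in auto)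
  finally show ?case by (simp add: meval_pCons[OF M])
qed

lemma sim_mult:
  fixes P T Q R :: "complex mat"
  assumes T: "T \<in> carrier_mat d d" and R: "R \<in> carrier_mat d d"
    and P: "P \<in> carrier_mat d d" and Q: "Q \<in> carrier_mat d d" and QP: "Q * P = 1\<^sub>m d"
  shows "(P * T * Q) * (P * R * Q) = P * (T * R) * Q"
proof -
  have PTQ: "P * T * Q \<in> carrier_mat d d" using P T Q by simp
  have "(P * T * Q) * (P * R * Q) = (P * T * Q) * (P * (R * Q))" using assoc_mult_mat[OF P R Q] by simp
  also have "\<dots> = ((P * T * Q) * P) * (R * Q)" using assoc_mult_mat[OF PTQ P, of "R * Q" d] R Q by simp
  also have "(P * T * Q) * P = (P * T) * (Q * P)" using assoc_mult_mat[of "P * T" d d Q d P d] P T Q by simp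
  also have "\<dots> = P * T" using QP P T by simp
  also have "(P * T) * (R * Q) = P * (T * (R * Q))" using assoc_mult_mat[OF P T, of "R * Q" d] R Q by simp
  also have "T * (R * Q) = (T * R) * Q" using assoc_mult_mat[OF T R Q] by simp
  also have "P * ((T * R) * Q) = (P * (T * R)) * Q" using assoc_mult_mat[OF P, of "T * R" d Q d] T R Q by simp
  finally show ?thesis .
qed

lemma meval_sim:
  assumes M: "M \<in> carrier_mat d d" and T: "T \<in> carrier_mat d d"
    and P: "P \<in> carrier_mat d d" and Q: "Q \<in> carrier_mat d d"
    and QP: "Q * P = 1\<^sub>m d" and PQ: "P * Q = 1\<^sub>m d" and MPTQ: "M = P * T * Q"
  shows "meval p M = P * meval p T * Q"
proof (induction p rule: pCons_induct)
  case 0 then show ?case using M T P Q by (simp add: right_mult_zero_mat left_mult_zero_mat)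
next
  case (pCons a p)
  have R: "meval p T \<in> carrier_mat d d" using T by auto
  have "P * (a \<cdot>\<^sub>m 1\<^sub>m d + T * meval p T) * Q = (P * (a \<cdot>\<^sub>m 1\<^sub>m d) + P * (T * meval p T)) * Q"
    by (subst mult_add_distrib_mat[of _ d d]) (use P T R in auto)
  also have "\<dots> = P * (a \<cdot>\<^sub>m 1\<^sub>m d) * Q + P * (T * meval p T) * Q"
    by (rule add_mult_distrib_mat) (use P T R Q in auto)
  also have "P * (a \<cdot>\<^sub>m 1\<^sub>m d) * Q = a \<cdot>\<^sub>m 1\<^sub>m d" using P Q PQ
    by (simp add: sm1_right mult_smult_assoc_mat[of _ d d])
  also have "P * (T * meval p T) * Q = (P * T * Q) * (P * meval p T * Q)"
    using sim_mult[OF T R P Q QP] by simp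
  finally show ?case using pCons M T MPTQ by (simp add: meval_pCons)
qed


lemma meval_lin_index:
  assumes T: "T \<in> carrier_mat d d" and l: "l < d" and j: "j < d"
  shows "meval [:-e,1:] T $$ (l,j) = T $$ (l,j) - (if l = j then e else 0)"
proof -
  have "meval [:-e,1:] T = (-e) \<cdot>\<^sub>m 1\<^sub>m d + T * (1 \<cdot>\<^sub>m 1\<^sub>m d)"
    using T by (simp add: meval_pCons[OF T])
  also have "T * (1 \<cdot>\<^sub>m 1\<^sub>m d) = T" using T by (simp add: one_smult_mat)
  finally show ?thesis using T l j by auto
qed

lemma tri_ann:
  assumes T: "T \<in> carrier_mat d d" and ut: "upper_triangular T" and es: "es = diag_mat T"
  shows "meval (\<Prod>e\<leftarrow>es. [:-e,1:]) T = 0\<^sub>m d d"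
proof -
  have len: "length es = d" using es T by (simp add: diag_mat_def)
  have esk: "k < d \<Longrightarrow> es ! k = T $$ (k,k)" for k using es T by (simp add: diag_mat_def)
  define N where "N k = meval (\<Prod>e\<leftarrow>take k es. [:-e,1:]) T" for k
  have NC: "N k \<in> carrier_mat d d" for k unfolding N_def using T by simp
  have main: "k \<le> d \<Longrightarrow> \<forall>i<d. \<forall>j<k. N k $$ (i,j) = 0" for k
  proof (induction k)
    case 0 then show ?case by simp
  next
    case (Suc k)
    then have kd: "k < d" by simp
    have IH: "\<forall>i<d. \<forall>j<k. N k $$ (i,j) = 0" using Suc by simp
    have "take (Suc k) es = take k es @ [es ! k]" using kd len by (simp add: take_Suc_conv_app_nth)
    then have "(\<Prod>e\<leftarrow>take (Suc k) es. [:-e,1:]) = (\<Prod>e\<leftarrow>take k es. [:-e,1:]) * [:-(es!k),1:]"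
      by (simp only: map_append prod_list.append list.map prod_list.Cons prod_list.Nil mult_1_right)
    then have "N (Suc k) = N k * meval [:-(es!k),1:] T"
      unfolding N_def by (simp only: meval_mult[OF T])
    moreover have DC: "meval [:-(es!k),1:] T \<in> carrier_mat d d" using T by simp
    ultimately have idx: "N (Suc k) $$ (i,j) = (\<Sum>l=0..<d. N k $$ (i,l) * meval [:-(es!k),1:] T $$ (l,j))"
      if "i < d" "j < d" for i j
      using that NC[of k] DC by (simp add: scalar_prod_def)
    show ?case
    proof (intro allI impI)
      fix i j assume i: "i < d" and j: "j < Suc k"
      have jd: "j < d" using j kd by simp
      have "N k $$ (i,l) * meval [:-(es!k),1:] T $$ (l,j) = 0" if l: "l \<in> {0..<d}" for l
      proof (cases "l < k")
        case True then show ?thesis using IH i by simp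
      next
        case False
        have ld: "l < d" using l by simp
        have "meval [:-(es!k),1:] T $$ (l,j) = 0"
        proof (cases "l = j")
          case True
          then have "l = k" using False j by simp
          then show ?thesis using meval_lin_index[OF T ld jd] esk[OF kd] True by simp
        next
          case False
          then have "j < l" using \<open>\<not> l < k\<close> j by simp
          then have "T $$ (l,j) = 0" using ut ld T unfolding upper_triangular_def by auto
          then show ?thesis using meval_lin_index[OF T ld jd] False by simp
        qed
        then show ?thesis by simp
      qed
      then have "(\<Sum>l=0..<d. N k $$ (i,l) * meval [:-(es!k),1:] T $$ (l,j)) = 0"
        by (intro sum.neutral) blast
      then show "N (Suc k) $$ (i,j) = 0" using idx[OF i jd] by simp
    qed
  qed
  have "N d = 0\<^sub>m d d"
    using main[of d] NC[of d] by (intro eq_matI) auto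
  then show ?thesis unfolding N_def using len by simp
qed

lemma invertible_inv:
  assumes A: "(A :: complex mat) \<in> carrier_mat d d" and inv: "invertible_mat A"
  shows "\<exists>B \<in> carrier_mat d d. A * B = 1\<^sub>m d \<and> B * A = 1\<^sub>m d"
proof -
  obtain B where AB: "A * B = 1\<^sub>m (dim_row A)" and BA: "B * A = 1\<^sub>m (dim_row B)"
    using inv unfolding invertible_mat_def inverts_mat_def by blast
  have "dim_col B = d" using AB A by (metis carrier_matD(1) index_mult_mat(3) index_one_mat(3))
  moreover have "dim_row B = d" using BA A by (metis carrier_matD(2) index_mult_mat(3) index_one_mat(3))
  ultimately show ?thesis using AB BA A by (auto intro!: bexI[of _ B])
qed

lemma annihilate:
  assumes M: "M \<in> carrier_mat d d" and inv: "invertible_mat M"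
  shows "\<exists>es. (\<forall>e\<in>set es. e \<noteq> 0) \<and> meval (\<Prod>e\<leftarrow>es. [:-e,1:]) M = 0\<^sub>m d d"
proof -
  obtain es where cp: "char_poly M = (\<Prod>a\<leftarrow>es. [:- a, 1:])" using char_poly_factorized[OF M] by blast
  obtain T P Q where sd: "schur_decomposition M es = (T,P,Q)" by (metis prod_cases3)
  from schur_decomposition[OF M cp sd]
  have sim: "similar_mat_wit M T P Q" and ut: "upper_triangular T" and dg: "diag_mat T = es" by auto
  have dr: "dim_row M = d" using M by simp
  have C: "T \<in> carrier_mat d d" "P \<in> carrier_mat d d" "Q \<in> carrier_mat d d"
    and PQ: "P * Q = 1\<^sub>m d" and QP: "Q * P = 1\<^sub>m d" and MPTQ: "M = P * T * Q"
    using sim M unfolding similar_mat_wit_def Let_def dr by auto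
  have "meval (\<Prod>e\<leftarrow>es. [:-e,1:]) M = P * meval (\<Prod>e\<leftarrow>es. [:-e,1:]) T * Q"
    by (rule meval_sim[OF M C QP PQ MPTQ])
  also have "\<dots> = 0\<^sub>m d d" using tri_ann[OF C(1) ut dg[symmetric]] C
    by (simp add: right_mult_zero_mat left_mult_zero_mat)
  finally have ann: "meval (\<Prod>e\<leftarrow>es. [:-e,1:]) M = 0\<^sub>m d d" .
  obtain B where B: "B \<in> carrier_mat d d" and MB: "M * B = 1\<^sub>m d" using invertible_inv[OF M inv] by blast
  have "det M * det B = 1" using det_mult[OF M B] MB by simp
  then have dM: "det M \<noteq> 0" by auto
  have "det M = det P * det T * det Q" using MPTQ C by (simp add: det_mult)
  moreover have "det T = prod_list es" using det_upper_triangular[OF ut C(1)] dg by simp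
  ultimately have "prod_list es \<noteq> 0" using dM by auto
  then have "\<forall>e\<in>set es. e \<noteq> 0" by (auto simp: prod_list_zero_iff)
  then show ?thesis using ann by blast
qed

lemma mat_root:
  assumes M: "M \<in> carrier_mat d d" and inv: "invertible_mat M" and n: "n > 0"
  shows "\<exists>p. meval p M ^\<^sub>m n = M"
proof -
  obtain es where nz: "\<forall>e\<in>set es. e \<noteq> 0" and ann: "meval (\<Prod>e\<leftarrow>es. [:-e,1:]) M = 0\<^sub>m d d"
    using annihilate[OF M inv] by blast
  obtain p where "(\<Prod>e\<leftarrow>es. [:-e,1:]) dvd p ^ n - [:0,1:]" using root_poly_list[OF nz n] by blast
  then obtain r where r: "p ^ n - [:0,1:] = (\<Prod>e\<leftarrow>es. [:-e,1:]) * r" by auto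
  then have "p ^ n = [:0,1:] + (\<Prod>e\<leftarrow>es. [:-e,1:]) * r" by (simp add: algebra_simps)
  then have "meval (p ^ n) M = M + 0\<^sub>m d d * meval r M"
    by (simp add: meval_add[OF M] meval_mult[OF M] meval_X[OF M] ann)
  also have "\<dots> = M" using M by (simp add: left_mult_zero_mat)
  finally have "meval p M ^\<^sub>m n = M" by (simp add: meval_power[OF M])
  then show ?thesis by blast
qed


lemma idx_Suc: "idx (Suc n) d = (\<lambda>(y,ys). y # ys) ` ({..<d} \<times> idx n d)"
  unfolding idx_def by (auto simp: length_Suc_conv image_iff)

lemma idx_0: "idx 0 d = {[]}" unfolding idx_def by auto

lemma finite_idx: "finite (idx n d)"
proof (induction n)
  case 0 then show ?case by (simp add: idx_0)
next
  case (Suc n) then show ?case by (simp add: idx_Suc)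
qed

lemma idx_nth: "xs \<in> idx n d \<Longrightarrow> k < n \<Longrightarrow> xs ! k < d"
  unfolding idx_def using nth_mem by fastforce

lemma idx_len: "xs \<in> idx n d \<Longrightarrow> length xs = n"
  unfolding idx_def by auto

lemma sum_prod_idx:
  "(\<Sum>ys\<in>idx n d. \<Prod>k<n. f k (ys ! k)) = (\<Prod>k<n. \<Sum>y<d. f k y :: complex)"
proof (induction n arbitrary: f)
  case 0 then show ?case by (simp add: idx_0)
next
  case (Suc n)
  have inj: "inj_on (\<lambda>(y,ys). y # ys) ({..<d} \<times> idx n d)" by (auto simp: inj_on_def)
  have "(\<Sum>ys\<in>idx (Suc n) d. \<Prod>k<Suc n. f k (ys ! k))
      = (\<Sum>(y,ys)\<in>{..<d} \<times> idx n d. \<Prod>k<Suc n. f k ((y # ys) ! k))"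
    unfolding idx_Suc by (subst sum.reindex[OF inj]) (simp add: case_prod_unfold)
  also have "\<dots> = (\<Sum>(y,ys)\<in>{..<d} \<times> idx n d. f 0 y * (\<Prod>k<n. f (Suc k) (ys ! k)))"
    by (intro sum.cong refl) (auto simp: prod.lessThan_Suc_shift simp del: prod.lessThan_Suc)
  also have "\<dots> = (\<Sum>y<d. f 0 y) * (\<Sum>ys\<in>idx n d. \<Prod>k<n. f (Suc k) (ys ! k))"
    by (simp add: sum_product sum.cartesian_product)
  also have "\<dots> = (\<Sum>y<d. f 0 y) * (\<Prod>k<n. \<Sum>y<d. f (Suc k) y)" using Suc.IH[of "\<lambda>k. f (Suc k)"] by simp
  also have "\<dots> = (\<Prod>k<Suc n. \<Sum>y<d. f k y)" by (simp only: prod.lessThan_Suc_shift)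
  finally show ?case .
qed

abbreviation T :: "nat \<Rightarrow> nat \<Rightarrow> (nat \<Rightarrow> complex mat) \<Rightarrow> (nat list \<Rightarrow> complex) \<Rightarrow> (nat list \<Rightarrow> complex)"
  where "T \<equiv> tensor_apply"

lemma T_cong_mat:
  assumes "\<And>k. k < n \<Longrightarrow> A k = B k"
  shows "T n d A \<psi> xs = T n d B \<psi> xs"
proof -
  have "(\<Prod>k<n. A k $$ (xs!k, ys!k)) = (\<Prod>k<n. B k $$ (xs!k, ys!k))" for ys
    by (rule prod.cong) (auto simp: assms)
  then show ?thesis unfolding tensor_apply_def by simp
qed

lemma T_cong_vec:
  assumes "\<And>ys. ys \<in> idx n d \<Longrightarrow> \<psi> ys = \<chi> ys"
  shows "T n d A \<psi> xs = T n d A \<chi> xs"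
  unfolding tensor_apply_def using assms by (intro sum.cong refl) auto

lemma T_comp:
  assumes A: "\<And>k. k < n \<Longrightarrow> A k \<in> carrier_mat d d" and B: "\<And>k. k < n \<Longrightarrow> B k \<in> carrier_mat d d"
    and xs: "xs \<in> idx n d"
  shows "T n d A (T n d B \<psi>) xs = T n d (\<lambda>k. A k * B k) \<psi> xs"
proof -
  have "T n d A (T n d B \<psi>) xs
      = (\<Sum>ys\<in>idx n d. \<Sum>zs\<in>idx n d. (\<Prod>k<n. A k $$ (xs ! k, ys ! k)) * ((\<Prod>k<n. B k $$ (ys ! k, zs ! k)) * \<psi> zs))"
    unfolding tensor_apply_def by (simp add: sum_distrib_left)
  also have "\<dots> = (\<Sum>zs\<in>idx n d. \<Sum>ys\<in>idx n d. (\<Prod>k<n. A k $$ (xs ! k, ys ! k) * B k $$ (ys ! k, zs ! k)) * \<psi> zs)"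
    by (subst sum.swap) (simp add: prod.distrib mult.assoc)
  also have "\<dots> = (\<Sum>zs\<in>idx n d. (\<Sum>ys\<in>idx n d. \<Prod>k<n. A k $$ (xs ! k, ys ! k) * B k $$ (ys ! k, zs ! k)) * \<psi> zs)"
    by (simp add: sum_distrib_right)
  also have "\<dots> = (\<Sum>zs\<in>idx n d. (\<Prod>k<n. \<Sum>y<d. A k $$ (xs ! k, y) * B k $$ (y, zs ! k)) * \<psi> zs)"
    by (subst sum_prod_idx) simp
  also have "\<dots> = (\<Sum>zs\<in>idx n d. (\<Prod>k<n. (A k * B k) $$ (xs ! k, zs ! k)) * \<psi> zs)"
  proof -
    have "(\<Sum>y<d. A k $$ (xs ! k, y) * B k $$ (y, zs ! k)) = (A k * B k) $$ (xs ! k, zs ! k)"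
      if zs: "zs \<in> idx n d" and k: "k \<in> {..<n}" for zs k
    proof -
    have "xs ! k < d" "zs ! k < d" using idx_nth[OF xs] idx_nth[OF zs] k by auto
    then show "(\<Sum>y<d. A k $$ (xs ! k, y) * B k $$ (y, zs ! k)) = (A k * B k) $$ (xs ! k, zs ! k)"
      using A[of k] B[of k] k by (simp add: scalar_prod_def atLeast0LessThan)
    qed
    then have eq: "zs \<in> idx n d \<Longrightarrow> (\<Prod>k<n. \<Sum>y<d. A k $$ (xs ! k, y) * B k $$ (y, zs ! k)) = (\<Prod>k<n. (A k * B k) $$ (xs ! k, zs ! k))" for zs
      by (intro prod.cong) auto
    then show ?thesis by (intro sum.cong refl) simp
  qed
  finally show ?thesis unfolding tensor_apply_def .
qed

lemma prod_one_idx: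
  assumes xs: "xs \<in> idx n d" and ys: "ys \<in> idx n d"
  shows "(\<Prod>k<n. 1\<^sub>m d $$ (xs ! k, ys ! k) :: complex) = (if xs = ys then 1 else 0)"
proof (cases "xs = ys")
  case True then show ?thesis using idx_nth[OF xs] by simp
next
  case False
  have "\<exists>k<n. xs ! k \<noteq> ys ! k" using False idx_len[OF xs] idx_len[OF ys] nth_equalityI by metis
  then obtain k where k: "k < n" "xs ! k \<noteq> ys ! k" by blast
  then have "1\<^sub>m d $$ (xs ! k, ys ! k) = (0::complex)" using idx_nth[OF xs] idx_nth[OF ys] by simp
  then show ?thesis using False k by (auto intro: prod_zero)
qed

lemma T_one:
  assumes "\<And>k. k < n \<Longrightarrow> A k = 1\<^sub>m d" and xs: "xs \<in> idx n d"
  shows "T n d A \<psi> xs = \<psi> xs"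
proof -
  have "T n d A \<psi> xs = (\<Sum>ys\<in>idx n d. (if xs = ys then 1 else 0) * \<psi> ys)"
  proof -
    have "(\<Prod>k<n. A k $$ (xs!k, ys!k)) = (\<Prod>k<n. 1\<^sub>m d $$ (xs!k, ys!k))" for ys
      by (rule prod.cong) (auto simp: assms)
    then show ?thesis unfolding tensor_apply_def using prod_one_idx[OF xs] by (intro sum.cong refl) simp
  qed
  also have "\<dots> = (\<Sum>ys\<in>idx n d. if xs = ys then \<psi> ys else 0)" by (intro sum.cong) auto
  also have "\<dots> = \<psi> xs" using xs finite_idx by (simp add: sum.delta)
  finally show ?thesis .
qed


abbreviation tr :: "nat \<Rightarrow> nat \<Rightarrow> nat \<Rightarrow> nat" where "tr i j \<equiv> Transposition.transpose i j"

definition sw :: "nat \<Rightarrow> nat \<Rightarrow> nat \<Rightarrow> nat list \<Rightarrow> nat list" where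
  "sw n i j xs = map (\<lambda>k. xs ! tr i j k) [0..<n]"

lemma tr_lt: "i < n \<Longrightarrow> j < n \<Longrightarrow> k < n \<Longrightarrow> tr i j k < n"
  by (simp add: transpose_def)

lemma sw_len[simp]: "length (sw n i j xs) = n" unfolding sw_def by simp

lemma sw_nth: "k < n \<Longrightarrow> sw n i j xs ! k = xs ! tr i j k" unfolding sw_def by simp

lemma sw_idx: assumes "i < n" "j < n" "xs \<in> idx n d" shows "sw n i j xs \<in> idx n d"
proof -
  have "\<forall>k<n. sw n i j xs ! k < d" using assms by (simp add: sw_nth idx_nth tr_lt)
  then show ?thesis unfolding idx_def by (auto simp: in_set_conv_nth)
qed

lemma sw_sw: assumes "i < n" "j < n" "length xs = n" shows "sw n i j (sw n i j xs) = xs"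
  by (rule nth_equalityI) (use assms in \<open>auto simp: sw_nth tr_lt\<close>)

lemma perm_sw:
  assumes "i < n" "j < n"
  shows "perm_apply n (tr i j) \<psi> xs = \<psi> (sw n i j xs)"
proof -
  have "inv_into {..<n} (tr i j) k = tr i j k" if "k < n" for k
    by (rule inv_into_f_eq) (use assms that in \<open>auto simp: tr_lt\<close>)
  then show ?thesis unfolding perm_apply_def sw_def by (intro arg_cong[where f=\<psi>]) auto
qed

lemma sym_sw:
  assumes "perm_symmetric n d \<psi>" "i < n" "j < n" "ys \<in> idx n d"
  shows "\<psi> (sw n i j ys) = \<psi> ys"
proof -
  have "tr i j permutes {..<n}" using assms by (intro permutes_swap_id) auto
  then show ?thesis using assms perm_sw[of i n j \<psi> ys] unfolding perm_symmetric_def by auto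
qed

lemma prod_sw:
  assumes ij: "i < n" "j < n"
  shows "(\<Prod>k<n. A k $$ (sw n i j xs ! k, sw n i j zs ! k)) = (\<Prod>k<n. A (tr i j k) $$ (xs ! k, zs ! k))"
proof -
  have "(\<Prod>k<n. A k $$ (sw n i j xs ! k, sw n i j zs ! k)) = (\<Prod>k<n. A k $$ (xs ! tr i j k, zs ! tr i j k))"
    by (intro prod.cong) (auto simp: sw_nth)
  also have "\<dots> = (\<Prod>k<n. A (tr i j k) $$ (xs ! k, zs ! k))"
    by (rule prod.reindex_bij_witness[of _ "tr i j" "tr i j"]) (use ij in \<open>auto simp: tr_lt\<close>)
  finally show ?thesis .
qed

lemma T_sw:
  assumes ij: "i < n" "j < n" and xs: "xs \<in> idx n d"
  shows "T n d A \<psi> (sw n i j xs) = T n d (\<lambda>k. A (tr i j k)) (\<lambda>ys. \<psi> (sw n i j ys)) xs"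
proof -
  have "T n d A \<psi> (sw n i j xs) = (\<Sum>ys\<in>idx n d. (\<Prod>k<n. A k $$ (sw n i j xs ! k, ys ! k)) * \<psi> ys)"
    unfolding tensor_apply_def ..
  also have "\<dots> = (\<Sum>zs\<in>idx n d. (\<Prod>k<n. A k $$ (sw n i j xs ! k, sw n i j zs ! k)) * \<psi> (sw n i j zs))"
    by (rule sum.reindex_bij_witness[of _ "sw n i j" "sw n i j"])
       (use ij in \<open>auto simp: sw_sw sw_idx idx_len\<close>)
  also have "\<dots> = (\<Sum>zs\<in>idx n d. (\<Prod>k<n. A (tr i j k) $$ (xs ! k, zs ! k)) * \<psi> (sw n i j zs))"
    by (simp only: prod_sw[OF ij])
  finally show ?thesis unfolding tensor_apply_def .
qed

lemma swap_sym:
  assumes sym: "perm_symmetric n d \<psi>" and ij: "i < n" "j < n"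
    and inv: "\<And>ys. ys \<in> idx n d \<Longrightarrow> T n d A \<psi> (sw n i j ys) = T n d A \<psi> ys"
    and xs: "xs \<in> idx n d"
  shows "T n d A \<psi> xs = T n d (\<lambda>k. A (tr i j k)) \<psi> xs"
proof -
  have "T n d A \<psi> xs = T n d A \<psi> (sw n i j xs)" using inv[OF xs] by simp
  also have "\<dots> = T n d (\<lambda>k. A (tr i j k)) (\<lambda>ys. \<psi> (sw n i j ys)) xs" by (rule T_sw[OF ij xs])
  also have "\<dots> = T n d (\<lambda>k. A (tr i j k)) \<psi> xs" by (rule T_cong_vec) (rule sym_sw[OF sym ij])
  finally show ?thesis .
qed

lemma T_const_sym:
  assumes sym: "perm_symmetric n d \<phi>" and ij: "i < n" "j < n" and ys: "ys \<in> idx n d"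
  shows "T n d (\<lambda>_. C) \<phi> (sw n i j ys) = T n d (\<lambda>_. C) \<phi> ys"
  using T_sw[OF ij ys, of "\<lambda>_. C" \<phi>] T_cong_vec[of n d \<phi> "\<lambda>ys. \<phi> (sw n i j ys)" "\<lambda>_. C" ys]
    sym_sw[OF sym ij] by simp

definition E :: "nat \<Rightarrow> nat \<Rightarrow> complex mat \<Rightarrow> nat \<Rightarrow> complex mat" where
  "E d j X = (\<lambda>k. if k = j then X else 1\<^sub>m d)"

lemma E_carrier: "X \<in> carrier_mat d d \<Longrightarrow> E d j X k \<in> carrier_mat d d"
  unfolding E_def by auto

lemma prod_E:
  assumes j: "j < n"
  shows "(\<Prod>k<n. E d j X k $$ (xs ! k, ys ! k)) = X $$ (xs ! j, ys ! j) * (\<Prod>k\<in>{..<n} - {j}. 1\<^sub>m d $$ (xs ! k, ys ! k))"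
proof -
  have "(\<Prod>k<n. E d j X k $$ (xs ! k, ys ! k)) = E d j X j $$ (xs ! j, ys ! j) * (\<Prod>k\<in>{..<n} - {j}. E d j X k $$ (xs ! k, ys ! k))"
    using j by (subst prod.remove[of _ j]) auto
  also have "(\<Prod>k\<in>{..<n} - {j}. E d j X k $$ (xs ! k, ys ! k)) = (\<Prod>k\<in>{..<n} - {j}. 1\<^sub>m d $$ (xs ! k, ys ! k))"
    by (intro prod.cong) (auto simp: E_def)
  finally show ?thesis by (simp add: E_def)
qed

lemma T_E_lin:
  assumes j: "j < n" and X: "X \<in> carrier_mat d d" and Y: "Y \<in> carrier_mat d d" and xs: "xs \<in> idx n d"
  shows "T n d (E d j (a \<cdot>\<^sub>m X + Y)) \<psi> xs = a * T n d (E d j X) \<psi> xs + T n d (E d j Y) \<psi> xs"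
proof -
  have "(\<Prod>k<n. E d j (a \<cdot>\<^sub>m X + Y) k $$ (xs ! k, ys ! k)) =
        a * (\<Prod>k<n. E d j X k $$ (xs ! k, ys ! k)) + (\<Prod>k<n. E d j Y k $$ (xs ! k, ys ! k))"
    if ys: "ys \<in> idx n d" for ys
  proof -
    have "xs ! j < d" "ys ! j < d" using idx_nth[OF xs j] idx_nth[OF ys j] by auto
    then show ?thesis using X Y unfolding prod_E[OF j] by (simp add: algebra_simps)
  qed
  then have "(\<Sum>ys\<in>idx n d. (\<Prod>k<n. E d j (a \<cdot>\<^sub>m X + Y) k $$ (xs ! k, ys ! k)) * \<psi> ys)
     = (\<Sum>ys\<in>idx n d. a * ((\<Prod>k<n. E d j X k $$ (xs ! k, ys ! k)) * \<psi> ys) + (\<Prod>k<n. E d j Y k $$ (xs ! k, ys ! k)) * \<psi> ys)"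
    by (intro sum.cong refl) (simp add: distrib_right mult.assoc)
  then show ?thesis unfolding tensor_apply_def by (simp add: sum.distrib sum_distrib_left)
qed

lemma T_E_zero:
  assumes j: "j < n" and xs: "xs \<in> idx n d"
  shows "T n d (E d j (0\<^sub>m d d)) \<psi> xs = 0"
proof -
  have "(\<Prod>k<n. E d j (0\<^sub>m d d) k $$ (xs ! k, ys ! k)) = 0" if ys: "ys \<in> idx n d" for ys
    using idx_nth[OF xs j] idx_nth[OF ys j] unfolding prod_E[OF j] by simp
  then show ?thesis unfolding tensor_apply_def by simp
qed

lemma T_E_one:
  assumes xs: "xs \<in> idx n d"
  shows "T n d (E d j (1\<^sub>m d)) \<psi> xs = \<psi> xs"
  by (rule T_one[OF _ xs]) (simp add: E_def)


lemma E_mult: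
  assumes X: "X \<in> carrier_mat d d" and Y: "Y \<in> carrier_mat d d" and xs: "xs \<in> idx n d"
  shows "T n d (E d j X) (T n d (E d j Y) \<psi>) xs = T n d (E d j (X * Y)) \<psi> xs"
proof -
  have "T n d (E d j X) (T n d (E d j Y) \<psi>) xs = T n d (\<lambda>l. E d j X l * E d j Y l) \<psi> xs"
    by (rule T_comp[OF _ _ xs]) (use X Y in \<open>auto simp: E_carrier\<close>)
  also have "\<dots> = T n d (E d j (X * Y)) \<psi> xs"
    by (rule T_cong_mat) (auto simp: E_def)
  finally show ?thesis .
qed

lemma commute_sites:
  assumes X: "X \<in> carrier_mat d d" and Y: "Y \<in> carrier_mat d d" and xs: "xs \<in> idx n d"
    and c: "j = 0 \<Longrightarrow> X * Y = Y * X"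
  shows "T n d (E d j X) (T n d (E d 0 Y) \<psi>) xs = T n d (E d 0 Y) (T n d (E d j X) \<psi>) xs"
proof -
  have "T n d (E d j X) (T n d (E d 0 Y) \<psi>) xs = T n d (\<lambda>l. E d j X l * E d 0 Y l) \<psi> xs"
    by (rule T_comp[OF _ _ xs]) (use X Y in \<open>auto simp: E_carrier\<close>)
  also have "\<dots> = T n d (\<lambda>l. E d 0 Y l * E d j X l) \<psi> xs"
    by (rule T_cong_mat) (use X Y c in \<open>auto simp: E_def\<close>)
  also have "\<dots> = T n d (E d 0 Y) (T n d (E d j X) \<psi>) xs"
    by (rule T_comp[symmetric, OF _ _ xs]) (use X Y in \<open>auto simp: E_carrier\<close>)
  finally show ?thesis .
qed

lemma move_prod:
  assumes X: "X \<in> carrier_mat d d" and Y: "Y \<in> carrier_mat d d" and c: "X * Y = Y * X"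
    and hX: "\<And>xs. xs \<in> idx n d \<Longrightarrow> T n d (E d j X) \<psi> xs = T n d (E d 0 X) \<psi> xs"
    and hY: "\<And>xs. xs \<in> idx n d \<Longrightarrow> T n d (E d j Y) \<psi> xs = T n d (E d 0 Y) \<psi> xs"
    and xs: "xs \<in> idx n d"
  shows "T n d (E d j (X * Y)) \<psi> xs = T n d (E d 0 (X * Y)) \<psi> xs"
proof -
  have "T n d (E d j (X * Y)) \<psi> xs = T n d (E d j X) (T n d (E d j Y) \<psi>) xs"
    by (rule E_mult[symmetric, OF X Y xs])
  also have "\<dots> = T n d (E d j X) (T n d (E d 0 Y) \<psi>) xs" by (rule T_cong_vec) (rule hY)
  also have "\<dots> = T n d (E d 0 Y) (T n d (E d j X) \<psi>) xs" by (rule commute_sites[OF X Y xs c])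
  also have "\<dots> = T n d (E d 0 Y) (T n d (E d 0 X) \<psi>) xs" by (rule T_cong_vec) (rule hX)
  also have "\<dots> = T n d (E d 0 (Y * X)) \<psi> xs" by (rule E_mult[OF Y X xs])
  finally show ?thesis using c by simp
qed

lemma move_poly:
  assumes M: "M \<in> carrier_mat d d" and j: "j < n"
    and hM: "\<And>xs. xs \<in> idx n d \<Longrightarrow> T n d (E d j M) \<psi> xs = T n d (E d 0 M) \<psi> xs"
    and xs: "xs \<in> idx n d"
  shows "T n d (E d j (meval p M)) \<psi> xs = T n d (E d 0 (meval p M)) \<psi> xs"
  using xs
proof (induction p arbitrary: xs rule: pCons_induct)
  case 0
  have "meval 0 M = 0\<^sub>m d d" using M by simp
  then show ?case using T_E_zero[OF j 0] T_E_zero[of 0 n xs d \<psi>] j 0 by simp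
next
  case (pCons a p)
  let ?Y = "meval p M"
  have Y: "?Y \<in> carrier_mat d d" using M by simp
  have MY: "M * ?Y \<in> carrier_mat d d" using M Y by simp
  have c: "M * ?Y = ?Y * M" using meval_comm[OF M M refl] .
  have mv: "T n d (E d j (M * ?Y)) \<psi> xs = T n d (E d 0 (M * ?Y)) \<psi> xs" if "xs \<in> idx n d" for xs
    by (rule move_prod[OF M Y c hM pCons.IH that])
  have eq: "meval (pCons a p) M = a \<cdot>\<^sub>m 1\<^sub>m d + M * ?Y" by (rule meval_pCons[OF M])
  have "T n d (E d j (meval (pCons a p) M)) \<psi> xs = a * T n d (E d j (1\<^sub>m d)) \<psi> xs + T n d (E d j (M * ?Y)) \<psi> xs"
    unfolding eq by (rule T_E_lin[OF j _ MY pCons.prems]) simp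
  also have "\<dots> = a * T n d (E d 0 (1\<^sub>m d)) \<psi> xs + T n d (E d 0 (M * ?Y)) \<psi> xs"
    using mv[OF pCons.prems] T_E_one[OF pCons.prems] by simp
  also have "\<dots> = T n d (E d 0 (meval (pCons a p) M)) \<psi> xs"
    unfolding eq by (rule T_E_lin[symmetric, OF _ _ MY pCons.prems]) (use j in auto)
  finally show ?case .
qed

lemma pow_collapse:
  assumes C: "C \<in> carrier_mat d d"
    and hC: "\<And>j xs. j < n \<Longrightarrow> xs \<in> idx n d \<Longrightarrow> T n d (E d j C) \<psi> xs = T n d (E d 0 C) \<psi> xs"
  shows "m \<le> n \<Longrightarrow> xs \<in> idx n d \<Longrightarrow> T n d (\<lambda>l. if l < m then C else 1\<^sub>m d) \<psi> xs = T n d (E d 0 (C ^\<^sub>m m)) \<psi> xs"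
proof (induction m arbitrary: xs)
  case 0
  have "C ^\<^sub>m 0 = 1\<^sub>m d" using C by simp
  moreover have "T n d (\<lambda>l. if l < 0 then C else 1\<^sub>m d) \<psi> xs = \<psi> xs" by (rule T_one[OF _ 0(2)]) simp
  ultimately show ?case using T_E_one[OF 0(2), of 0 \<psi>] by simp
next
  case (Suc m)
  have m: "m < n" using Suc by simp
  have Cm: "C ^\<^sub>m m \<in> carrier_mat d d" using C by simp
  have "T n d (\<lambda>l. if l < Suc m then C else 1\<^sub>m d) \<psi> xs = T n d (\<lambda>l. E d m C l * (if l < m then C else 1\<^sub>m d)) \<psi> xs"
    by (rule T_cong_mat) (use C in \<open>auto simp: E_def\<close>)
  also have "\<dots> = T n d (E d m C) (T n d (\<lambda>l. if l < m then C else 1\<^sub>m d) \<psi>) xs"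
    by (rule T_comp[symmetric, OF _ _ Suc.prems(2)]) (use C in \<open>auto simp: E_carrier\<close>)
  also have "\<dots> = T n d (E d m C) (T n d (E d 0 (C ^\<^sub>m m)) \<psi>) xs"
    by (rule T_cong_vec) (use Suc in auto)
  also have "\<dots> = T n d (E d 0 (C ^\<^sub>m m)) (T n d (E d m C) \<psi>) xs"
    by (rule commute_sites[OF C Cm Suc.prems(2)]) (use C in simp)
  also have "\<dots> = T n d (E d 0 (C ^\<^sub>m m)) (T n d (E d 0 C) \<psi>) xs"
    by (rule T_cong_vec) (rule hC[OF m])
  also have "\<dots> = T n d (E d 0 (C ^\<^sub>m m * C)) \<psi> xs" by (rule E_mult[OF Cm C Suc.prems(2)])
  finally show ?case by simp
qed


lemma ct_carrier[simp]: "A \<in> carrier_mat d d \<Longrightarrow> conj_transpose A \<in> carrier_mat d d"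
  unfolding conj_transpose_def by auto

lemma ct_index[simp]: "i < dim_col A \<Longrightarrow> j < dim_row A \<Longrightarrow> conj_transpose A $$ (i,j) = cnj (A $$ (j,i))"
  unfolding conj_transpose_def by auto

lemma ct_dims[simp]: "dim_row (conj_transpose A) = dim_col A" "dim_col (conj_transpose A) = dim_row A"
  unfolding conj_transpose_def by auto

lemma ct_mult:
  assumes A: "A \<in> carrier_mat d d" and B: "B \<in> carrier_mat d d"
  shows "conj_transpose (A * B) = conj_transpose B * conj_transpose A"
  using A B by (intro eq_matI) (auto simp: scalar_prod_def mult.commute)

lemma ct_ct: "A \<in> carrier_mat d d \<Longrightarrow> conj_transpose (conj_transpose A) = A"
  by (intro eq_matI) auto

lemma ct_one: "conj_transpose (1\<^sub>m d) = 1\<^sub>m d"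
  by (intro eq_matI) auto

context fixes d :: nat begin

lemma sq_mult[simp]: "A \<in> carrier_mat d d \<Longrightarrow> B \<in> carrier_mat d d \<Longrightarrow> (A :: complex mat) * B \<in> carrier_mat d d"
  by simp

lemma sq_assoc: "A \<in> carrier_mat d d \<Longrightarrow> B \<in> carrier_mat d d \<Longrightarrow> C \<in> carrier_mat d d \<Longrightarrow> (A :: complex mat) * B * C = A * (B * C)"
  by simp

lemma sq_one_l: "A \<in> carrier_mat d d \<Longrightarrow> 1\<^sub>m d * (A :: complex mat) = A" by simp
lemma sq_one_r: "A \<in> carrier_mat d d \<Longrightarrow> (A :: complex mat) * 1\<^sub>m d = A" by simp

lemma comm_pow:
  assumes A: "A \<in> carrier_mat d d" and B: "B \<in> carrier_mat d d" and c: "(A :: complex mat) * B = B * A"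
  shows "A * B ^\<^sub>m k = B ^\<^sub>m k * A"
proof (induction k)
  case 0 then show ?case using A B by simp
next
  case (Suc k)
  have Bk: "B ^\<^sub>m k \<in> carrier_mat d d" using B by simp
  have "A * B ^\<^sub>m Suc k = (A * B ^\<^sub>m k) * B" using A B Bk by (simp add: sq_assoc)
  also have "\<dots> = B ^\<^sub>m k * (A * B)" using Suc A B Bk by (simp add: sq_assoc)
  also have "\<dots> = B ^\<^sub>m k * (B * A)" using c by simp
  also have "\<dots> = B ^\<^sub>m Suc k * A" using A B Bk by (simp add: sq_assoc)
  finally show ?case .
qed

lemma pow_mult_comm:
  assumes A: "A \<in> carrier_mat d d" and B: "B \<in> carrier_mat d d" and c: "(A :: complex mat) * B = B * A"
  shows "(A * B) ^\<^sub>m k = A ^\<^sub>m k * B ^\<^sub>m k"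
proof (induction k)
  case 0 then show ?case using A B by simp
next
  case (Suc k)
  have Ak: "A ^\<^sub>m k \<in> carrier_mat d d" and Bk: "B ^\<^sub>m k \<in> carrier_mat d d" using A B by auto
  have "(A * B) ^\<^sub>m Suc k = A ^\<^sub>m k * (B ^\<^sub>m k * A) * B" using Suc A B Ak Bk by (simp add: sq_assoc)
  also have "B ^\<^sub>m k * A = A * B ^\<^sub>m k" using comm_pow[OF A B c] by simp
  finally show ?case using A B Ak Bk by (simp add: sq_assoc)
qed

end

lemma ct_pow:
  assumes A: "A \<in> carrier_mat d d"
  shows "conj_transpose (A ^\<^sub>m k) = conj_transpose A ^\<^sub>m k"
proof (induction k)
  case 0 then show ?case using A by (simp add: ct_one)
next
  case (Suc k)
  have "conj_transpose (A ^\<^sub>m Suc k) = conj_transpose A * conj_transpose (A ^\<^sub>m k)"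
    using A by (simp add: ct_mult[of _ d])
  also have "\<dots> = conj_transpose A * conj_transpose A ^\<^sub>m k" using Suc by simp
  also have "\<dots> = conj_transpose A ^\<^sub>m k * conj_transpose A"
    using comm_pow[OF ct_carrier[OF A] ct_carrier[OF A] refl, of k] .
  finally show ?case by simp
qed



context fixes d :: nat begin

definition trc :: "complex mat \<Rightarrow> complex" where
  "trc A = (\<Sum>i<dim_row A. A $$ (i,i))"

definition fro :: "complex mat \<Rightarrow> real" where
  "fro A = (\<Sum>i<dim_row A. \<Sum>j<dim_col A. (cmod (A $$ (i,j)))\<^sup>2)"

lemma trc_ct:
  assumes A: "A \<in> carrier_mat d d"
  shows "trc (A * conj_transpose A) = of_real (fro A)"
proof -
  have "trc (A * conj_transpose A) = (\<Sum>i<d. \<Sum>l<d. A $$ (i,l) * cnj (A $$ (i,l)))"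
    unfolding trc_def using A by (intro sum.cong refl) (auto simp: scalar_prod_def atLeast0LessThan)
  also have "\<dots> = (\<Sum>i<d. \<Sum>l<d. of_real ((cmod (A $$ (i,l)))\<^sup>2))"
    by (simp only: complex_norm_square)
  also have "\<dots> = of_real (fro A)" unfolding fro_def using A by simp
  finally show ?thesis .
qed

lemma fro_nonneg: "fro A \<ge> 0"
  unfolding fro_def by (intro sum_nonneg) auto

lemma fro_zero:
  assumes A: "A \<in> carrier_mat d d" and f: "fro A = 0"
  shows "A = 0\<^sub>m d d"
proof (rule eq_matI)
  fix i j assume i: "i < dim_row (0\<^sub>m d d :: complex mat)" and j: "j < dim_col (0\<^sub>m d d :: complex mat)"
  have "\<forall>i\<in>{..<d}. (\<Sum>j<d. (cmod (A $$ (i,j)))\<^sup>2) = 0"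
    using f A unfolding fro_def by (subst sum_nonneg_eq_0_iff[symmetric]) (auto intro: sum_nonneg)
  then have "\<forall>i\<in>{..<d}. \<forall>j\<in>{..<d}. (cmod (A $$ (i,j)))\<^sup>2 = 0"
    by (subst (asm) sum_nonneg_eq_0_iff) auto
  then show "A $$ (i,j) = 0\<^sub>m d d $$ (i,j)" using i j by auto
qed (use A in auto)

lemma trc_add: "A \<in> carrier_mat d d \<Longrightarrow> B \<in> carrier_mat d d \<Longrightarrow> trc (A + B) = trc A + trc B"
  unfolding trc_def by (simp add: sum.distrib)

lemma trc_zero: "trc (0\<^sub>m d d) = 0" unfolding trc_def by simp

lemma herm_one:
  assumes C: "C \<in> carrier_mat d d" and n: "n > 0" and Hn: "(conj_transpose C * C) ^\<^sub>m n = 1\<^sub>m d"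
  shows "conj_transpose C * C = 1\<^sub>m d"
proof -
  define Cs where "Cs = conj_transpose C"
  define H where "H = Cs * C"
  have CsC: "Cs \<in> carrier_mat d d" unfolding Cs_def using C by simp
  have HC: "H \<in> carrier_mat d d" unfolding H_def using C CsC by simp
  have Hh: "conj_transpose H = H" unfolding H_def Cs_def using C by (simp add: ct_mult[of _ d] ct_ct)
  define K where "K = meval [:-1,1:] H"
  have KC: "K \<in> carrier_mat d d" unfolding K_def using HC by simp
  define Ks where "Ks = conj_transpose K"
  have KsC: "Ks \<in> carrier_mat d d" unfolding Ks_def using KC by simp
  define L where "L p = trc (K * meval p H * Ks)" for p
  have L_add: "L (p + q) = L p + L q" for p q
  proof -
    have P: "meval p H \<in> carrier_mat d d" and Q: "meval q H \<in> carrier_mat d d" using HC by auto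
    have "K * meval (p + q) H * Ks = K * meval p H * Ks + K * meval q H * Ks"
      using P Q KC KsC by (simp add: meval_add[OF HC] mult_add_distrib_mat[of _ d d] add_mult_distrib_mat[of _ d d])
    then show ?thesis unfolding L_def using P Q KC KsC by (simp add: trc_add)
  qed
  have L_sum: "L (\<Sum>j<m. f j) = (\<Sum>j<m. L (f j))" for m :: nat and f :: "nat \<Rightarrow> complex poly"
  proof (induction m)
    case 0
    have "K * meval 0 H * Ks = 0\<^sub>m d d" using HC KC KsC by simp
    then show ?case unfolding L_def by (simp add: trc_zero)
  next
    case (Suc m) then show ?case by (simp add: L_add)
  qed
  have Hpow: "meval ([:0,1:] ^ j) H = H ^\<^sub>m j" for j using meval_power[OF HC] meval_X[OF HC] by simp
  have x1: "[:-1,1:] = [:0,1::complex:] - 1" by (simp add: one_pCons)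
  have "[:-1,1:] * (\<Sum>j<n. [:0,1:] ^ j) = [:0,1:] ^ n - (1 :: complex poly)"
    unfolding x1 by (rule power_diff_1_eq[symmetric])
  also have "\<dots> = [:0,1:] ^ n + [:-1:]" by (simp add: one_pCons)
  finally have pe: "[:-1,1:] * (\<Sum>j<n. [:0,1:] ^ j) = [:0,1:] ^ n + [:-(1::complex):]" .
  have "K * meval (\<Sum>j<n. [:0,1:] ^ j) H = meval ([:0,1:] ^ n + [:-1:]) H"
    unfolding K_def pe[symmetric] by (rule meval_mult[OF HC, symmetric])
  also have "\<dots> = H ^\<^sub>m n + (-1) \<cdot>\<^sub>m 1\<^sub>m d" by (simp add: meval_add[OF HC] Hpow meval_const[OF HC])
  also have "\<dots> = 0\<^sub>m d d" unfolding H_def Cs_def Hn by (intro eq_matI) auto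
  finally have "L (\<Sum>j<n. [:0,1:] ^ j) = 0" unfolding L_def using KsC by (simp add: trc_zero)
  then have sum0: "(\<Sum>j<n. L ([:0,1:] ^ j)) = 0" by (simp add: L_sum)
  define Z where "Z j = (if even j then K * H ^\<^sub>m (j div 2) else K * H ^\<^sub>m (j div 2) * Cs)" for j
  have ZC: "Z j \<in> carrier_mat d d" for j unfolding Z_def using KC HC CsC by simp
  have LZ: "L ([:0,1:] ^ j) = trc (Z j * conj_transpose (Z j))" for j
  proof -
    define G where "G = H ^\<^sub>m (j div 2)"
    have GC: "G \<in> carrier_mat d d" unfolding G_def using HC by simp
    have Gh: "conj_transpose G = G" unfolding G_def using HC Hh by (simp add: ct_pow[OF HC])
    show ?thesis
    proof (cases "even j")
      case True
      then have j: "j = j div 2 + j div 2" by presburger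
      have "H ^\<^sub>m j = G * G" unfolding G_def
        by (subst j, subst Hpow[symmetric], simp add: power_add meval_mult[OF HC] Hpow)
      then have "K * meval ([:0,1:] ^ j) H * Ks = (K * G) * conj_transpose (K * G)"
        using KC GC Gh by (simp add: Hpow Ks_def ct_mult[of _ d] sq_assoc)
      then show ?thesis unfolding L_def Z_def G_def using True by simp
    next
      case False
      then have j: "j = j div 2 + 1 + j div 2" by presburger
      have px: "[:0,1:]^j = [:0,1::complex:]^(j div 2) * [:0,1:] * [:0,1:]^(j div 2)"
        by (subst j) (simp only: power_add power_one_right)
      have "H ^\<^sub>m j = G * H * G" unfolding G_def
        by (subst Hpow[symmetric], simp only: px meval_mult[OF HC] Hpow meval_X[OF HC])
      moreover have "conj_transpose (K * G * Cs) = C * (G * Ks)"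
        unfolding Cs_def Ks_def using KC GC Gh C by (simp add: ct_mult[of _ d] ct_ct)
      ultimately have "K * meval ([:0,1:] ^ j) H * Ks = (K * G * Cs) * conj_transpose (K * G * Cs)"
        using KC GC CsC C KsC unfolding Hpow by (simp add: H_def sq_assoc)
      then show ?thesis unfolding L_def Z_def G_def using False by simp
    qed
  qed
  have "(\<Sum>j<n. complex_of_real (fro (Z j))) = 0" using sum0 LZ trc_ct[OF ZC] by simp
  then have "(\<Sum>j<n. fro (Z j)) = 0" by (metis of_real_eq_0_iff of_real_sum)
  then have "\<forall>j\<in>{..<n}. fro (Z j) = 0" by (subst (asm) sum_nonneg_eq_0_iff) (auto simp: fro_nonneg)
  then have "fro (Z 0) = 0" using n by auto
  moreover have "Z 0 = K" unfolding Z_def using KC HC by simp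
  ultimately have K0: "K = 0\<^sub>m d d" using fro_zero[OF KC] by simp
  have "H = 1\<^sub>m d"
  proof (rule eq_matI)
    fix i j assume i: "i < dim_row (1\<^sub>m d :: complex mat)" and j: "j < dim_col (1\<^sub>m d :: complex mat)"
    have "K $$ (i,j) = 0" using K0 i j by simp
    then show "H $$ (i,j) = 1\<^sub>m d $$ (i,j)" unfolding K_def using meval_lin_index[OF HC, of i j 1] i j by auto
  qed (use HC in auto)
  then show ?thesis unfolding H_def Cs_def .
qed

end


fun prodB :: "(nat \<Rightarrow> complex mat) \<Rightarrow> nat \<Rightarrow> nat \<Rightarrow> complex mat" where
  "prodB B d 0 = 1\<^sub>m d"
| "prodB B d (Suc m) = prodB B d m * B m"

lemma inv_det:
  assumes A: "(A :: complex mat) \<in> carrier_mat d d" and inv: "invertible_mat A"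
  shows "det A \<noteq> 0"
proof -
  obtain B where B: "B \<in> carrier_mat d d" and AB: "A * B = 1\<^sub>m d" using invertible_inv[OF A inv] by blast
  have "det A * det B = 1" using det_mult[OF A B] AB by simp
  then show ?thesis by auto
qed

lemma det_invertible:
  assumes A: "(A :: complex mat) \<in> carrier_mat d d" and dA: "det A \<noteq> 0"
  shows "invertible_mat A"
proof -
  have "A \<in> Units (ring_mat TYPE(complex) d ())" by (rule det_non_zero_imp_unit[OF A dA])
  then obtain B where B: "B \<in> carrier_mat d d" and BA: "B * A = 1\<^sub>m d" and AB: "A * B = 1\<^sub>m d"
    unfolding Units_def ring_mat_def by auto
  show ?thesis unfolding invertible_mat_def inverts_mat_def
    using A B AB BA by (auto simp: square_mat.simps intro!: exI[of _ B])
qed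

lemma det_pow_mat:
  assumes A: "(A :: complex mat) \<in> carrier_mat d d"
  shows "det (A ^\<^sub>m k) = det A ^ k"
proof (induction k)
  case 0 then show ?case using A by simp
next
  case (Suc k) then show ?case using A by (simp add: det_mult[of _ d])
qed

lemma unitary_mult:
  assumes U: "unitary_mat d U" and V: "unitary_mat d V"
  shows "unitary_mat d (U * V)"
proof -
  have UC: "U \<in> carrier_mat d d" and VC: "V \<in> carrier_mat d d" and u1: "U * conj_transpose U = 1\<^sub>m d"
    and u2: "conj_transpose U * U = 1\<^sub>m d" and v1: "V * conj_transpose V = 1\<^sub>m d"
    and v2: "conj_transpose V * V = 1\<^sub>m d" using U V unfolding unitary_mat_def by auto
  have ct: "conj_transpose (U * V) = conj_transpose V * conj_transpose U" by (rule ct_mult[OF UC VC])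
  have "U * V * conj_transpose (U * V) = U * (V * conj_transpose V) * conj_transpose U"
    unfolding ct using UC VC by (simp add: sq_assoc[where d=d])
  also have "\<dots> = 1\<^sub>m d" using v1 u1 UC by simp
  finally have 1: "U * V * conj_transpose (U * V) = 1\<^sub>m d" .
  have "conj_transpose (U * V) * (U * V) = conj_transpose V * (conj_transpose U * U) * V"
    unfolding ct using UC VC by (simp add: sq_assoc[where d=d])
  also have "\<dots> = 1\<^sub>m d" using v2 u2 VC by simp
  finally show ?thesis using 1 UC VC unfolding unitary_mat_def by simp
qed

lemma unitary_ct: "unitary_mat d U \<Longrightarrow> unitary_mat d (conj_transpose U)"
  unfolding unitary_mat_def by (auto simp: ct_ct)

lemma unitary_one: "unitary_mat d (1\<^sub>m d)"
  unfolding unitary_mat_def by (simp add: ct_one)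

lemma unitary_invertible: "unitary_mat d U \<Longrightarrow> invertible_mat U"
  unfolding unitary_mat_def invertible_mat_def inverts_mat_def
  by (auto simp: square_mat.simps intro!: exI[of _ "conj_transpose U"])

lemma unitroot:
  assumes MU: "unitary_mat d M" and n: "n > 0" and Cn: "meval p M ^\<^sub>m n = M"
  shows "unitary_mat d (meval p M)"
proof -
  have M: "M \<in> carrier_mat d d" and m1: "M * conj_transpose M = 1\<^sub>m d" and m2: "conj_transpose M * M = 1\<^sub>m d"
    using MU unfolding unitary_mat_def by auto
  define C where "C = meval p M"
  define Cs where "Cs = conj_transpose C"
  define Ms where "Ms = conj_transpose M"
  have CC: "C \<in> carrier_mat d d" unfolding C_def using M by simp
  have CsC: "Cs \<in> carrier_mat d d" unfolding Cs_def using CC by simp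
  have MsC: "Ms \<in> carrier_mat d d" unfolding Ms_def using M by simp
  have c1: "M * C = C * M" unfolding C_def by (rule meval_comm[OF M M refl])
  have c2: "Ms * Cs = Cs * Ms" unfolding Ms_def Cs_def using c1
    by (metis ct_mult[OF M CC] ct_mult[OF CC M])
  have "Cs * M = (M * Ms) * (Cs * M)" using m1 CsC M unfolding Ms_def by simp
  also have "\<dots> = M * ((Ms * Cs) * M)" using M MsC CsC by (simp add: sq_assoc[where d=d])
  also have "\<dots> = M * ((Cs * Ms) * M)" using c2 by simp
  also have "\<dots> = M * (Cs * (Ms * M))" using M MsC CsC by (simp add: sq_assoc[where d=d])
  also have "\<dots> = M * Cs" using m2 CsC unfolding Ms_def by simp
  finally have c3: "Cs * M = M * Cs" .
  have c4: "Cs * C = C * Cs" unfolding C_def by (rule meval_comm[OF M CsC c3])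
  have "(Cs * C) ^\<^sub>m n = Cs ^\<^sub>m n * C ^\<^sub>m n" by (rule pow_mult_comm[OF CsC CC c4])
  also have "Cs ^\<^sub>m n = conj_transpose (C ^\<^sub>m n)" unfolding Cs_def by (rule ct_pow[OF CC, symmetric])
  also have "C ^\<^sub>m n = M" unfolding C_def by (rule Cn)
  finally have "(Cs * C) ^\<^sub>m n = 1\<^sub>m d" using m2 by simp
  then have h: "Cs * C = 1\<^sub>m d" unfolding Cs_def using herm_one[OF CC n] by simp
  then have "C * Cs = 1\<^sub>m d" using c4 by simp
  then show ?thesis using h CC unfolding unitary_mat_def C_def Cs_def by simp
qed


theorem theorem1:
  fixes n d :: nat and \<psi> \<phi> :: "nat list \<Rightarrow> complex" and As :: "nat \<Rightarrow> complex mat"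
  assumes "n \<ge> 2" and "d \<ge> 2"
    and "perm_symmetric n d \<psi>" and "perm_symmetric n d \<phi>"
    and "\<forall>k<n. As k \<in> carrier_mat d d \<and> invertible_mat (As k)"
    and "\<forall>xs\<in>idx n d. tensor_apply n d As \<psi> xs = \<phi> xs"
  shows "(\<exists>A. A \<in> carrier_mat d d \<and> invertible_mat A \<and>
              (\<forall>xs\<in>idx n d. tensor_apply n d (\<lambda>_. A) \<psi> xs = \<phi> xs))
       \<and> ((\<forall>k<n. unitary_mat d (As k)) \<longrightarrow>
            (\<exists>A. unitary_mat d A \<and> invertible_mat A \<and>
              (\<forall>xs\<in>idx n d. tensor_apply n d (\<lambda>_. A) \<psi> xs = \<phi> xs)))"
proof -
  note symp = assms(3) and symf = assms(4)
  have n0: "0 < n" using assms(1) by simp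
  have Asc: "\<And>k. k < n \<Longrightarrow> As k \<in> carrier_mat d d" using assms(5) by simp
  have phiAs: "\<And>xs. xs \<in> idx n d \<Longrightarrow> T n d As \<psi> xs = \<phi> xs" using assms(6) by simp
  have "\<forall>k. \<exists>B. k < n \<longrightarrow> (B \<in> carrier_mat d d \<and> As k * B = 1\<^sub>m d \<and> B * As k = 1\<^sub>m d)"
    using invertible_inv assms(5) by blast
  then obtain Ai where Ai: "\<And>k. k < n \<Longrightarrow> Ai k \<in> carrier_mat d d \<and> As k * Ai k = 1\<^sub>m d \<and> Ai k * As k = 1\<^sub>m d"
    by metis
  have Aic: "\<And>k. k < n \<Longrightarrow> Ai k \<in> carrier_mat d d" using Ai by blast
  have AAi: "\<And>k. k < n \<Longrightarrow> As k * Ai k = 1\<^sub>m d" using Ai by blast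
  have AiA: "\<And>k. k < n \<Longrightarrow> Ai k * As k = 1\<^sub>m d" using Ai by blast
  define B where "B l = Ai 0 * As l" for l
  have Bc: "\<And>l. l < n \<Longrightarrow> B l \<in> carrier_mat d d" unfolding B_def using Aic Asc n0 by simp
  have B0: "B 0 = 1\<^sub>m d" unfolding B_def using AiA n0 by simp
  have star: "T n d (E d k (B k)) \<psi> xs = T n d (E d 0 (B k)) \<psi> xs" if k: "k < n" and xs: "xs \<in> idx n d" for k xs
  proof (cases "k = 0")
    case True then show ?thesis by simp
  next
    case False
    have symAs: "T n d As \<psi> ys = T n d (\<lambda>l. As (tr 0 k l)) \<psi> ys" if ys: "ys \<in> idx n d" for ys
    proof (rule swap_sym[OF symp n0 k _ ys])
      fix zs assume zs: "zs \<in> idx n d"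
      show "T n d As \<psi> (sw n 0 k zs) = T n d As \<psi> zs"
        using phiAs[OF sw_idx[OF n0 k zs]] phiAs[OF zs] sym_sw[OF symf n0 k zs] by simp
    qed
    define W where "W l = (if l = k then Ai 0 else Ai l)" for l
    have Wc: "\<And>l. l < n \<Longrightarrow> W l \<in> carrier_mat d d" unfolding W_def using Aic n0 by simp
    have "T n d (E d k (B k)) \<psi> xs = T n d (\<lambda>l. W l * As l) \<psi> xs"
      by (rule T_cong_mat) (auto simp: E_def W_def B_def AiA)
    also have "\<dots> = T n d W (T n d As \<psi>) xs" by (rule T_comp[symmetric, OF Wc Asc xs])
    also have "\<dots> = T n d W (T n d (\<lambda>l. As (tr 0 k l)) \<psi>) xs" by (rule T_cong_vec) (rule symAs)
    also have "\<dots> = T n d (\<lambda>l. W l * As (tr 0 k l)) \<psi> xs"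
      by (rule T_comp[OF Wc _ xs]) (use Asc tr_lt[OF n0 k] in auto)
    also have "\<dots> = T n d (E d 0 (B k)) \<psi> xs"
    proof (rule T_cong_mat)
      fix l assume l: "l < n"
      show "W l * As (tr 0 k l) = E d 0 (B k) l"
        using False l AiA[OF n0] AiA[OF l] unfolding W_def E_def B_def
        by (cases "l = 0"; cases "l = k") (auto simp: transpose_def)
    qed
    finally show ?thesis .
  qed
  have Pc: "m \<le> n \<Longrightarrow> prodB B d m \<in> carrier_mat d d" for m
    by (induction m) (auto simp: Bc)
  have collapse: "m \<le> n \<Longrightarrow> xs \<in> idx n d \<Longrightarrow> T n d (\<lambda>l. if l < m then B l else 1\<^sub>m d) \<psi> xs = T n d (E d 0 (prodB B d m)) \<psi> xs" for m xs
  proof (induction m arbitrary: xs)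
    case 0
    have "T n d (\<lambda>l. if l < 0 then B l else 1\<^sub>m d) \<psi> xs = \<psi> xs" by (rule T_one[OF _ 0(2)]) simp
    then show ?case using T_E_one[OF 0(2), of 0 \<psi>] by simp
  next
    case (Suc m)
    have m: "m < n" using Suc by simp
    have Pm: "prodB B d m \<in> carrier_mat d d" using Pc Suc by simp
    have Bm: "B m \<in> carrier_mat d d" using Bc m by simp
    have "T n d (\<lambda>l. if l < Suc m then B l else 1\<^sub>m d) \<psi> xs = T n d (\<lambda>l. E d m (B m) l * (if l < m then B l else 1\<^sub>m d)) \<psi> xs"
    proof (rule T_cong_mat)
      fix l assume l: "l < n"
      have "dim_row (B l) = d" "dim_col (B l) = d" using Bc[OF l] by auto
      then show "(if l < Suc m then B l else 1\<^sub>m d) = E d m (B m) l * (if l < m then B l else 1\<^sub>m d)"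
        unfolding E_def by (cases "l < m"; cases "l = m") auto
    qed
    also have "\<dots> = T n d (E d m (B m)) (T n d (\<lambda>l. if l < m then B l else 1\<^sub>m d) \<psi>) xs"
      by (rule T_comp[symmetric, OF _ _ Suc.prems(2)]) (use Bc Bm in \<open>auto simp: E_carrier\<close>)
    also have "\<dots> = T n d (E d m (B m)) (T n d (E d 0 (prodB B d m)) \<psi>) xs"
      by (rule T_cong_vec) (use Suc in auto)
    also have "\<dots> = T n d (E d 0 (prodB B d m)) (T n d (E d m (B m)) \<psi>) xs"
      by (rule commute_sites[OF Bm Pm Suc.prems(2)]) (simp add: B0)
    also have "\<dots> = T n d (E d 0 (prodB B d m)) (T n d (E d 0 (B m)) \<psi>) xs"
      by (rule T_cong_vec) (rule star[OF m])
    also have "\<dots> = T n d (E d 0 (prodB B d m * B m)) \<psi> xs" by (rule E_mult[OF Pm Bm Suc.prems(2)])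
    finally show ?case by simp
  qed
  define M where "M = prodB B d n"
  have Mc: "M \<in> carrier_mat d d" unfolding M_def using Pc by simp
  have TB: "T n d B \<psi> xs = T n d (E d 0 M) \<psi> xs" if xs: "xs \<in> idx n d" for xs
    using collapse[of n xs] xs T_cong_mat[of n "\<lambda>l. if l < n then B l else 1\<^sub>m d" B d \<psi> xs]
    unfolding M_def by simp
  have phiM: "T n d (\<lambda>_. As 0) (T n d (E d 0 M) \<psi>) xs = \<phi> xs" if xs: "xs \<in> idx n d" for xs
  proof -
    have "T n d (\<lambda>_. As 0) (T n d (E d 0 M) \<psi>) xs = T n d (\<lambda>_. As 0) (T n d B \<psi>) xs"
      by (rule T_cong_vec) (simp add: TB)
    also have "\<dots> = T n d (\<lambda>l. As 0 * B l) \<psi> xs" by (rule T_comp[OF _ Bc xs]) (use Asc n0 in auto)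
    also have "\<dots> = T n d As \<psi> xs"
    proof (rule T_cong_mat)
      fix l assume l: "l < n"
      have "As 0 * B l = (As 0 * Ai 0) * As l" unfolding B_def
        by (rule assoc_mult_mat[symmetric, OF Asc[OF n0] Aic[OF n0] Asc[OF l]])
      then show "As 0 * B l = As l" using AAi[OF n0] Asc[OF l] by simp
    qed
    also have "\<dots> = \<phi> xs" by (rule phiAs[OF xs])
    finally show ?thesis .
  qed
  have chiphi: "T n d (E d 0 M) \<psi> xs = T n d (\<lambda>_. Ai 0) \<phi> xs" if xs: "xs \<in> idx n d" for xs
  proof -
    have "T n d (E d 0 M) \<psi> xs = T n d B \<psi> xs" using TB[OF xs] by simp
    also have "\<dots> = T n d (\<lambda>_. Ai 0) (T n d As \<psi>) xs"
      unfolding B_def by (rule T_comp[symmetric, OF _ Asc xs]) (use Aic n0 in auto)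
    also have "\<dots> = T n d (\<lambda>_. Ai 0) \<phi> xs" by (rule T_cong_vec) (rule phiAs)
    finally show ?thesis .
  qed
  have Mmove: "T n d (E d j M) \<psi> xs = T n d (E d 0 M) \<psi> xs" if j: "j < n" and xs: "xs \<in> idx n d" for j xs
  proof (cases "j = 0")
    case True then show ?thesis by simp
  next
    case False
    have "T n d (E d 0 M) \<psi> xs = T n d (\<lambda>l. E d 0 M (tr 0 j l)) \<psi> xs"
    proof (rule swap_sym[OF symp n0 j _ xs])
      fix ys assume ys: "ys \<in> idx n d"
      show "T n d (E d 0 M) \<psi> (sw n 0 j ys) = T n d (E d 0 M) \<psi> ys"
        using chiphi[OF sw_idx[OF n0 j ys]] chiphi[OF ys] T_const_sym[OF symf n0 j ys] by simp
    qed
    also have "\<dots> = T n d (E d j M) \<psi> xs"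
      by (rule T_cong_mat) (use False in \<open>auto simp: E_def transpose_def\<close>)
    finally show ?thesis by simp
  qed
  have detA: "\<And>k. k < n \<Longrightarrow> det (As k) \<noteq> 0" using inv_det Asc assms(5) by blast
  have detAi0: "det (Ai 0) \<noteq> 0"
    using det_mult[OF Aic[OF n0] Asc[OF n0]] AiA[OF n0] by (metis det_one mult_zero_left zero_neq_one)
  have detP: "m \<le> n \<Longrightarrow> det (prodB B d m) \<noteq> 0" for m
  proof (induction m)
    case 0 then show ?case by simp
  next
    case (Suc m)
    have "det (prodB B d (Suc m)) = det (prodB B d m) * (det (Ai 0) * det (As m))"
      using Pc[of m] Suc Aic[OF n0] Asc[of m] unfolding B_def by (simp add: det_mult[of _ d])
    then show ?case using Suc detAi0 detA[of m] by simp
  qed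
  have Minv: "invertible_mat M" unfolding M_def by (rule det_invertible[OF Mc[unfolded M_def] detP]) simp
  obtain p where Cn: "meval p M ^\<^sub>m n = M" using mat_root[OF Mc Minv n0] by blast
  define C where "C = meval p M"
  have Cc: "C \<in> carrier_mat d d" unfolding C_def using Mc by simp
  have Cmove: "T n d (E d j C) \<psi> xs = T n d (E d 0 C) \<psi> xs" if "j < n" "xs \<in> idx n d" for j xs
    unfolding C_def by (rule move_poly[OF Mc that(1) _ that(2)]) (rule Mmove[OF that(1)])
  have TC: "T n d (\<lambda>_. C) \<psi> xs = T n d (E d 0 M) \<psi> xs" if xs: "xs \<in> idx n d" for xs
  proof -
    have "T n d (\<lambda>_. C) \<psi> xs = T n d (\<lambda>l. if l < n then C else 1\<^sub>m d) \<psi> xs"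
      by (rule T_cong_mat) simp
    also have "\<dots> = T n d (E d 0 (C ^\<^sub>m n)) \<psi> xs"
      by (rule pow_collapse[OF Cc Cmove _ xs]) auto
    finally show ?thesis using Cn unfolding C_def by simp
  qed
  define A where "A = As 0 * C"
  have Ac: "A \<in> carrier_mat d d" unfolding A_def using Asc n0 Cc by simp
  have Aeq: "\<forall>xs\<in>idx n d. T n d (\<lambda>_. A) \<psi> xs = \<phi> xs"
  proof
    fix xs assume xs: "xs \<in> idx n d"
    have "T n d (\<lambda>_. A) \<psi> xs = T n d (\<lambda>_. As 0) (T n d (\<lambda>_. C) \<psi>) xs"
      unfolding A_def by (rule T_comp[symmetric, OF _ _ xs]) (use Asc n0 Cc in auto)
    also have "\<dots> = T n d (\<lambda>_. As 0) (T n d (E d 0 M) \<psi>) xs" by (rule T_cong_vec) (rule TC)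
    also have "\<dots> = \<phi> xs" by (rule phiM[OF xs])
    finally show "T n d (\<lambda>_. A) \<psi> xs = \<phi> xs" .
  qed
  have dCM: "det C ^ n = det M" using det_pow_mat[OF Cc, of n] Cn unfolding C_def by simp
  have "det C \<noteq> 0"
  proof
    assume "det C = 0"
    then have "det C ^ n = 0" using n0 by simp
    then show False using dCM inv_det[OF Mc Minv] by simp
  qed
  then have "det A \<noteq> 0" unfolding A_def using det_mult[OF Asc[OF n0] Cc] detA[OF n0] by simp
  then have Ainv: "invertible_mat A" by (rule det_invertible[OF Ac])
  have part2: "\<exists>A. unitary_mat d A \<and> invertible_mat A \<and> (\<forall>xs\<in>idx n d. T n d (\<lambda>_. A) \<psi> xs = \<phi> xs)"
    if U: "\<forall>k<n. unitary_mat d (As k)"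
  proof -
    have U0: "unitary_mat d (As 0)" using U n0 by simp
    have "Ai 0 = Ai 0 * (As 0 * conj_transpose (As 0))" using U0 Aic[OF n0] unfolding unitary_mat_def by simp
    also have "\<dots> = (Ai 0 * As 0) * conj_transpose (As 0)"
      using Aic[OF n0] Asc[OF n0] by (simp add: sq_assoc[where d=d])
    also have "\<dots> = conj_transpose (As 0)" using AiA[OF n0] Asc[OF n0] by simp
    finally have Ai0: "Ai 0 = conj_transpose (As 0)" .
    have BU: "\<And>l. l < n \<Longrightarrow> unitary_mat d (B l)"
      unfolding B_def Ai0 using U U0 by (simp add: unitary_mult unitary_ct)
    have "m \<le> n \<Longrightarrow> unitary_mat d (prodB B d m)" for m
      by (induction m) (auto simp: unitary_one unitary_mult BU)
    then have MU: "unitary_mat d M" unfolding M_def by simp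
    have CU: "unitary_mat d C" unfolding C_def by (rule unitroot[OF MU n0 Cn])
    have AU: "unitary_mat d A" unfolding A_def by (rule unitary_mult[OF U0 CU])
    show ?thesis using AU Aeq unitary_invertible[OF AU] by blast
  qed
  show ?thesis using Ac Ainv Aeq part2 by blast
qed


end
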